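(* Let $m\ge1$ be an integer and $f(z)=\sum_{n\ge0}a_nz^{-n/m}$ a Gevrey-1 series whose Borel transform $\widetilde f(\zeta)=\sum_{n\ge1}\frac{a_n\zeta^{n/m-1}}{\Gamma(n/m)}$ extends analytically to $\Omega^\star$ with $|\widetilde f(\zeta)\zeta^{\frac{m-1}{m}}|\le Ae^{B|\zeta|}$ on $\Omega^\star$ for some $A,B>0$. Let $d_n$ ($n\ge1$) be defined by: for $l=1,\dots,m$, $\widetilde g_l(\xi)=\big(\frac{\xi}{1-e^{-\xi}}\big)^{\frac lm-1}\sum_{k\ge0}\frac{a_{l+mk}\xi^k}{\Gamma(\frac lm+k)}$ (principal branch, extended holomorphically to $\Delta$) and $\widetilde g_l(-\ln s)=\sum_{j\ge0}d_{l+mj}(1-s)^j$ for $s\in D(1,1)$. Then for every $n\ge1$, $$d_n=\frac{1}{\Gamma(\frac nm)}\Big(a_n+\sum_{\substack{j\ge1,\ l\ge1\\ l+jm=n}}d_{\frac lm,j}\,a_l\Big),$$ where for $r>0$ and $j\ge1$ $$d_{r,j}=\Big(\sum_{1\le p\le j}\frac{B_{j,p}\big(\frac{1!}{2},\frac{2!}{3},\dots,\frac{i!}{i+1},\dots\big)}{\Gamma(r-p)}\Big)\frac{\Gamma(r+j)}{j!}.$$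
   Context: $\Delta$ is the image of the open disc $D(1,1)=\{s:|s-1|<1\}$ under $s\mapsto-\ln s$ (principal logarithm); $\Delta^\star=\Delta\setminus\{0\}$; $\mathbb{C}_m^\star$ is the $m$-sheeted covering of $\mathbb{C}^\star$ (points $(|x|,\arg x)$, $\arg x\in\mathbb{R}/2\pi m\mathbb{Z}$, projection $\pi(x)=|x|e^{i\arg x}$, $x^{k/m}$ of modulus $|x|^{k/m}$ and argument $\frac km\arg x$); $\Omega^\star=\pi^{-1}(\Delta^\star)$. Gevrey-1 means $|a_n|\le CK^n\Gamma(1+n/m)$. $1/\Gamma(r-p)$ denotes the (entire) reciprocal Gamma function, equal to $0$ at non-positive integers. $B_{j,p}(x_1,x_2,\dots)$ are the partial exponential Bell polynomials: $B_{j,p}=\sum\frac{j!}{\prod_{i\ge1}k_i!\,(i!)^{k_i}}\prod_{i\ge1}x_i^{k_i}$, the sum over nonnegative integers $k_1,k_2,\dots$ with $\sum_i k_i=p$ and $\sum_i ik_i=j$. *)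

theory Defs
  imports "HOL-Analysis.Analysis"
begin

definition Delta :: "complex set" where
  "Delta = (\<lambda>s. - Ln s) ` ball 1 1"

text \<open>Omega-star, expressed in the global coordinate w = x^(1/m) of the m-sheeted covering
  of C-star (so that the point x has projection w^m and x^(k/m) = w^k).\<close>
definition Omega_star_coord :: "nat \<Rightarrow> complex set" where
  "Omega_star_coord m = {w. w \<noteq> 0 \<and> w ^ m \<in> Delta - {0}}"

definition gevrey1 :: "nat \<Rightarrow> (nat \<Rightarrow> complex) \<Rightarrow> bool" where
  "gevrey1 m a \<longleftrightarrow> (\<exists>C K. \<forall>n. norm (a n) \<le> C * K ^ n * Gamma (1 + real n / real m))"

definition bell_partial :: "nat \<Rightarrow> nat \<Rightarrow> (nat \<Rightarrow> complex) \<Rightarrow> complex" where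
  "bell_partial j p x =
     (\<Sum>k \<in> {k \<in> PiE {1..j} (\<lambda>_. {..p}). (\<Sum>i\<in>{1..j}. k i) = p \<and> (\<Sum>i\<in>{1..j}. i * k i) = j}.
        of_nat (fact j) / of_nat (\<Prod>i\<in>{1..j}. fact (k i) * fact i ^ k i) * (\<Prod>i\<in>{1..j}. x i ^ k i))"

text \<open>d_{r,j}, with 1/Gamma the entire reciprocal Gamma function rGamma.\<close>
definition dcoef :: "real \<Rightarrow> nat \<Rightarrow> complex" where
  "dcoef r j =
     (\<Sum>p\<in>{1..j}. bell_partial j p (\<lambda>i. of_nat (fact i) / of_nat (i + 1)) * rGamma (complex_of_real (r - real p)))
     * Gamma (complex_of_real (r + real j)) / of_nat (fact j)"

end

theory Submission
  imports Defs "HOL-Complex_Analysis.Complex_Analysis"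
begin


definition KS :: "nat set \<Rightarrow> nat \<Rightarrow> (nat \<Rightarrow> nat) set" where
  "KS I p = {k \<in> PiE I (\<lambda>_. {..p}). (\<Sum>i\<in>I. k i) = p}"

lemma finite_KS: "finite I \<Longrightarrow> finite (KS I p)"
  unfolding KS_def by (rule finite_subset[OF _ finite_PiE[of I "\<lambda>_. {..p}"]]) auto

lemma multinom:
  fixes Y :: "nat \<Rightarrow> complex fps"
  assumes "finite I"
  shows "fps_const (1 / fact p) * (\<Sum>i\<in>I. Y i) ^ p
         = (\<Sum>k\<in>KS I p. \<Prod>i\<in>I. fps_const (1 / fact (k i)) * Y i ^ k i)"
  using assms
proof (induction I arbitrary: p rule: finite_induct)
  case empty
  show ?case
  proof (cases p)
    case 0
    have "KS {} p = {\<lambda>_. undefined}" using 0 by (auto simp: KS_def)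
    then show ?thesis using 0 by simp
  next
    case (Suc q)
    have "KS {} p = {}" using Suc by (auto simp: KS_def)
    then show ?thesis using Suc by simp
  qed
next
  case (insert a I)
  define T where "T = (\<Sum>i\<in>I. Y i)"
  define f where "f = (\<lambda>i q. fps_const (1 / fact q) * Y i ^ q)"
  have "fps_const (1 / fact p) * (\<Sum>i\<in>insert a I. Y i) ^ p
        = fps_const (1 / fact p) * (Y a + T) ^ p"
    using insert by (simp add: T_def)
  also have "\<dots> = (\<Sum>q\<le>p. f a q * (fps_const (1 / fact (p - q)) * T ^ (p - q)))"
    unfolding binomial_ring sum_distrib_left
  proof (intro sum.cong refl)
    fix q assume q: "q \<in> {..p}"
    have "fps_const (1 / fact p) * (of_nat (p choose q) :: complex fps)
          = fps_const (1 / fact q) * fps_const (1 / fact (p - q))"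
    proof -
      have c: "(1 / fact p) * (of_nat (p choose q)::complex) = 1 / fact q * (1 / fact (p - q))"
        using q by (simp add: binomial_fact)
      have "fps_const (1 / fact p) * (of_nat (p choose q) :: complex fps)
           = fps_const ((1 / fact p) * (of_nat (p choose q)::complex))"
        by (simp flip: fps_of_nat)
      also have "\<dots> = fps_const (1 / fact q) * fps_const (1 / fact (p - q))"
        by (simp only: c fps_const_mult)
      finally show ?thesis .
    qed
    then show "fps_const (1 / fact p) * (of_nat (p choose q) * Y a ^ q * T ^ (p - q))
             = f a q * (fps_const (1 / fact (p - q)) * T ^ (p - q))"
      unfolding f_def by (metis (no_types, lifting) mult.assoc mult.left_commute)
  qed
  also have "\<dots> = (\<Sum>q\<le>p. \<Sum>k\<in>KS I (p - q). f a q * (\<Prod>i\<in>I. f i (k i)))"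
    using insert.IH unfolding T_def f_def by (simp add: sum_distrib_left)
  also have "\<dots> = (\<Sum>(q,k)\<in>Sigma {..p} (\<lambda>q. KS I (p - q)). f a q * (\<Prod>i\<in>I. f i (k i)))"
    by (subst sum.Sigma) (auto intro: finite_KS insert.hyps)
  also have "\<dots> = (\<Sum>k\<in>KS (insert a I) p. \<Prod>i\<in>insert a I. f i (k i))"
  proof (rule sum.reindex_bij_witness[where j = "\<lambda>(q,k). k(a := q)" and i = "\<lambda>k. (k a, k(a := undefined))"])
    fix qk assume "qk \<in> Sigma {..p} (\<lambda>q. KS I (p - q))"
    then obtain q k where qk: "qk = (q,k)" "q \<le> p" "k \<in> KS I (p - q)" by auto
    have ka: "k a = undefined" using qk insert.hyps by (auto simp: KS_def PiE_def extensional_def)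
    show "(case (case qk of (q, k) \<Rightarrow> k(a := q)) of k \<Rightarrow> (k a, k(a := undefined))) = qk"
      using qk ka by auto
    have s: "(\<Sum>i\<in>I. (k(a := q)) i) = (\<Sum>i\<in>I. k i)"
      using insert.hyps by (intro sum.cong) auto
    show "(case qk of (q, k) \<Rightarrow> k(a := q)) \<in> KS (insert a I) p"
      using qk insert.hyps s by (auto simp: KS_def PiE_def Pi_def extensional_def)
    have pr: "(\<Prod>i\<in>I. f i ((k(a := q)) i)) = (\<Prod>i\<in>I. f i (k i))"
      using insert.hyps by (intro prod.cong) auto
    show "(\<Prod>i\<in>insert a I. f i ((case qk of (q, k) \<Rightarrow> k(a := q)) i))
          = (case qk of (q, k) \<Rightarrow> f a q * (\<Prod>i\<in>I. f i (k i)))"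
      using qk insert.hyps pr by simp
  next
    fix k assume k: "k \<in> KS (insert a I) p"
    show "(case (k a, k(a := undefined)) of (q, k) \<Rightarrow> k(a := q)) = k" by simp
    have sI: "(\<Sum>i\<in>I. k i) = p - k a" and kap: "k a \<le> p"
      using k insert.hyps by (auto simp: KS_def)
    have s: "(\<Sum>i\<in>I. (k(a := undefined)) i) = (\<Sum>i\<in>I. k i)"
      using insert.hyps by (intro sum.cong) auto
    have le: "k i \<le> p - k a" if "i \<in> I" for i
      using member_le_sum[OF that, of k] insert.hyps sI by auto
    show "(k a, k(a := undefined)) \<in> Sigma {..p} (\<lambda>q. KS I (p - q))"
      using k kap sI s le insert.hyps by (auto simp: KS_def PiE_def Pi_def extensional_def)
  qed
  finally show ?case unfolding f_def .
qed

lemma trunc_power: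
  fixes f g :: "complex fps"
  assumes "\<forall>n\<le>j. f $ n = g $ n"
  shows "\<forall>n\<le>j. (f ^ p) $ n = (g ^ p) $ n"
proof (induction p)
  case 0 then show ?case by simp
next
  case (Suc p)
  show ?case
  proof (intro allI impI)
    fix n assume n: "n \<le> j"
    have "(f ^ Suc p) $ n = (\<Sum>i=0..n. f$i * (f^p)$(n - i))" by (simp add: fps_mult_nth)
    also have "\<dots> = (\<Sum>i=0..n. g$i * (g^p)$(n - i))"
      using n assms Suc.IH by (intro sum.cong) auto
    also have "\<dots> = (g ^ Suc p) $ n" by (simp add: fps_mult_nth)
    finally show "(f ^ Suc p) $ n = (g ^ Suc p) $ n" .
  qed
qed

lemma prod_const_X:
  assumes "finite I"
  shows "(\<Prod>i\<in>I. fps_const (c i) * fps_X ^ e i) = fps_const (\<Prod>i\<in>I. c i :: complex) * fps_X ^ (\<Sum>i\<in>I. e i)"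
  using assms by (induction I rule: finite_induct) (simp_all add: power_add mult_ac)

definition Ux :: "(nat \<Rightarrow> complex) \<Rightarrow> complex fps" where
  "Ux x = Abs_fps (\<lambda>i. if i = 0 then 0 else x i / fact i)"

lemma bell_eq: "bell_partial j p x = fact j / fact p * (Ux x ^ p) $ j"
proof -
  define V where "V = (\<Sum>i\<in>{1..j}. fps_const (x i / fact i) * fps_X ^ i)"
  have Vn: "V $ n = Ux x $ n" if "n \<le> j" for n
  proof (cases "n = 0")
    case True then show ?thesis by (simp add: V_def fps_sum_nth Ux_def)
  next
    case False
    have "V $ n = (\<Sum>i\<in>{1..j}. if n = i then x i / fact i else 0)"
      unfolding V_def fps_sum_nth by (intro sum.cong) (auto simp: fps_X_power_nth)
    also have "\<dots> = x n / fact n" using False that by (simp add: sum.delta)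
    finally show ?thesis using False by (simp add: Ux_def)
  qed
  have 1: "(Ux x ^ p) $ j = (V ^ p) $ j"
    using trunc_power[of j V "Ux x" p] Vn by simp
  define w where "w = (\<lambda>k. (\<Prod>i\<in>{1..j}. (x i / fact i) ^ k i / fact (k i)))"
  have 2: "fps_const (1 / fact p) * V ^ p
        = (\<Sum>k\<in>KS {1..j} p. fps_const (w k) * fps_X ^ (\<Sum>i\<in>{1..j}. i * k i))"
    unfolding V_def multinom[OF finite_atLeastAtMost]
  proof (intro sum.cong refl)
    fix k
    have "(\<Prod>i\<in>{1..j}. fps_const (1 / fact (k i)) * (fps_const (x i / fact i) * fps_X ^ i) ^ k i)
        = (\<Prod>i\<in>{1..j}. fps_const ((x i / fact i) ^ k i / fact (k i)) * fps_X ^ (i * k i))"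
      by (intro prod.cong refl) (simp add: power_mult_distrib fps_const_power power_mult mult_ac)
    also have "\<dots> = fps_const (w k) * fps_X ^ (\<Sum>i\<in>{1..j}. i * k i)"
      unfolding w_def by (rule prod_const_X) simp
    finally show "(\<Prod>i\<in>{1..j}. fps_const (1 / fact (k i)) * (fps_const (x i / fact i) * fps_X ^ i) ^ k i)
        = fps_const (w k) * fps_X ^ (\<Sum>i\<in>{1..j}. i * k i)" .
  qed
  have "1 / fact p * (V ^ p) $ j = (fps_const (1 / fact p) * V ^ p) $ j" by simp
  also have "\<dots> = (\<Sum>k\<in>KS {1..j} p. if (\<Sum>i\<in>{1..j}. i * k i) = j then w k else 0)"
    unfolding 2 by (simp add: fps_sum_nth fps_X_power_nth) (intro sum.cong, auto)
  also have "\<dots> = (\<Sum>k\<in>{k\<in>KS {1..j} p. (\<Sum>i\<in>{1..j}. i * k i) = j}. w k)"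
    by (rule sum.inter_filter[symmetric]) (simp add: finite_KS)
  finally have 3: "1 / fact p * (V ^ p) $ j = (\<Sum>k\<in>{k\<in>KS {1..j} p. (\<Sum>i\<in>{1..j}. i * k i) = j}. w k)" .
  have "bell_partial j p x = (\<Sum>k\<in>{k\<in>KS {1..j} p. (\<Sum>i\<in>{1..j}. i * k i) = j}. fact j * w k)"
    unfolding bell_partial_def KS_def
  proof (intro sum.cong)
    show "{k \<in> {1..j} \<rightarrow>\<^sub>E {..p}. sum k {1..j} = p \<and> (\<Sum>i = 1..j. i * k i) = j} =
          {k \<in> {k \<in> {1..j} \<rightarrow>\<^sub>E {..p}. sum k {1..j} = p}. (\<Sum>i = 1..j. i * k i) = j}" by auto
    fix k
    show "of_nat (fact j) / of_nat (\<Prod>i = 1..j. fact (k i) * fact i ^ k i) * (\<Prod>i = 1..j. x i ^ k i)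
          = fact j * w k"
      by (simp add: w_def of_nat_prod prod_dividef power_divide prod.distrib[symmetric] field_simps)
  qed
  also have "\<dots> = fact j * (1 / fact p * (V ^ p) $ j)" unfolding 3 by (simp add: sum_distrib_left)
  finally show ?thesis using 1 by simp
qed



lemma binom_nat_compose:
  fixes U :: "complex fps"
  assumes "U $ 0 = 0"
  shows "fps_binomial (of_nat n) oo U = (1 + U) ^ n"
  using assms by (simp add: fps_binomial_of_nat fps_compose_power[symmetric] fps_compose_add_distrib)

lemma key_coeff:
  fixes U S :: "complex fps" and c :: complex
  assumes U0: "U $ 0 = 0"
  shows "((fps_binomial c oo U) * (S oo (fps_X * (1 + U)))) $ J
       = (\<Sum>k=0..J. S $ k * (fps_binomial (c + of_nat k) oo U) $ (J - k))"
proof -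
  define P where "P = fps_binomial c oo U"
  define Xi where "Xi = fps_X * (1 + U)"
  have Xi0: "Xi $ 0 = 0" by (simp add: Xi_def)
  have Xip: "Xi ^ i = fps_X ^ i * (1 + U) ^ i" for i
    by (simp add: Xi_def power_mult_distrib)
  have Xiz: "(Xi ^ i) $ n = 0" if "n < i" for i n
    using that by (simp add: Xip fps_X_power_mult_nth)
  have PXi: "P * Xi ^ i = fps_X ^ i * (fps_binomial (c + of_nat i) oo U)" for i
  proof -
    have "P * Xi ^ i = fps_X ^ i * (P * (1 + U) ^ i)" by (simp add: Xip mult_ac)
    also have "P * (1 + U) ^ i = (fps_binomial c * fps_binomial (of_nat i)) oo U"
      by (simp add: P_def binom_nat_compose[OF U0] fps_compose_mult_distrib[OF U0])
    also have "\<dots> = fps_binomial (c + of_nat i) oo U" by (simp add: fps_binomial_add_mult)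
    finally show ?thesis .
  qed
  have inner: "(\<Sum>i=0..J - j. S $ i * (Xi ^ i) $ (J - j)) = (\<Sum>i=0..J. S $ i * (Xi ^ i) $ (J - j))" for j
    by (rule sum.mono_neutral_left) (auto simp: Xiz)
  have "(P * (S oo Xi)) $ J = (\<Sum>j=0..J. P $ j * (\<Sum>i=0..J - j. S $ i * (Xi ^ i) $ (J - j)))"
    by (simp add: fps_mult_nth fps_compose_nth)
  also have "\<dots> = (\<Sum>j=0..J. P $ j * (\<Sum>i=0..J. S $ i * (Xi ^ i) $ (J - j)))"
    using inner by (intro sum.cong refl) simp
  also have "\<dots> = (\<Sum>i=0..J. S $ i * (\<Sum>j=0..J. P $ j * (Xi ^ i) $ (J - j)))"
    unfolding sum_distrib_left by (rule sum.swap[THEN trans], intro sum.cong refl) (simp add: mult.left_commute)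
  also have "\<dots> = (\<Sum>i=0..J. S $ i * (P * Xi ^ i) $ J)"
    by (simp add: fps_mult_nth)
  also have "\<dots> = (\<Sum>k=0..J. S $ k * (fps_binomial (c + of_nat k) oo U) $ (J - k))"
    by (intro sum.cong refl) (simp add: PXi fps_X_power_mult_nth)
  finally show ?thesis unfolding P_def Xi_def .
qed



lemma fps_expansion_unique_at:
  fixes f g :: "complex \<Rightarrow> complex"
  assumes F: "f has_fps_expansion F" and G: "g has_fps_expansion G"
    and ev: "eventually (\<lambda>x. f x = g x) (at 0)"
  shows "F = G"
proof -
  have rF: "fps_conv_radius F > 0" and eF: "eventually (\<lambda>x. eval_fps F x = f x) (nhds 0)"
    using F by (auto simp: has_fps_expansion_def)
  have rG: "fps_conv_radius G > 0" and eG: "eventually (\<lambda>x. eval_fps G x = g x) (nhds 0)"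
    using G by (auto simp: has_fps_expansion_def)
  have eat: "eventually (\<lambda>x. eval_fps F x = eval_fps G x) (at 0)"
  proof -
    have "eventually (\<lambda>x. eval_fps F x = f x \<and> eval_fps G x = g x) (nhds 0)"
      using eF eG by (rule eventually_conj)
    then have "eventually (\<lambda>x. eval_fps F x = f x \<and> eval_fps G x = g x) (at 0)"
      by (auto simp: eventually_at_filter elim: eventually_mono)
    then show ?thesis using ev by eventually_elim auto
  qed
  have cF: "isCont (eval_fps F) 0"
    using has_fps_expansion_imp_continuous[OF eval_fps_has_fps_expansion[OF rF], of UNIV] by simp
  have cG: "isCont (eval_fps G) 0"
    using has_fps_expansion_imp_continuous[OF eval_fps_has_fps_expansion[OF rG], of UNIV] by simp
  have l1: "(eval_fps F \<longlongrightarrow> eval_fps F 0) (at 0)" using cF by (simp add: isCont_def)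
  have l2: "(eval_fps F \<longlongrightarrow> eval_fps G 0) (at 0)"
    using cG eat by (simp add: isCont_def tendsto_cong)
  have e0: "eval_fps F 0 = eval_fps G 0"
    using tendsto_unique[OF at_neq_bot l1 l2] .
  have "eventually (\<lambda>x. eval_fps F x = eval_fps G x) (nhds 0)"
    using eat e0 by (auto simp: eventually_at_filter elim!: eventually_mono)
  then show ?thesis using rF rG by (rule eval_fps_eqD[rotated 2])
qed

definition x0 :: "nat \<Rightarrow> complex" where "x0 = (\<lambda>i. of_nat (fact i) / of_nat (i + 1))"

lemma U0_nth: "Ux x0 $ i = (if i = 0 then 0 else 1 / of_nat (i + 1))"
  by (simp add: Ux_def x0_def)

lemma Xi_eq: "fps_X * (1 + Ux x0) = Abs_fps (\<lambda>n. 1 / of_nat n)"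
proof (rule fps_ext)
  fix n :: nat
  show "(fps_X * (1 + Ux x0)) $ n = Abs_fps (\<lambda>n. 1 / of_nat n) $ n"
  proof (cases n)
    case 0 then show ?thesis by simp
  next
    case (Suc k) then show ?thesis by (cases k) (simp_all add: U0_nth)
  qed
qed

lemma ln_exp: "(\<lambda>t. - Ln (1 - t)) has_fps_expansion Abs_fps (\<lambda>n. 1 / of_nat n)"
proof (rule has_fps_expansionI)
  have "eventually (\<lambda>t::complex. t \<in> ball 0 1) (nhds 0)"
    by (rule eventually_nhds_in_open) auto
  then show "eventually (\<lambda>t. (\<lambda>n. Abs_fps (\<lambda>n. 1 / of_nat n) $ n * t ^ n) sums - Ln (1 - t)) (nhds 0)"
  proof eventually_elim
    case (elim t)
    then have "norm (-t) < 1" by simp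
    from sums_minus[OF Ln_series'[OF this]]
    show ?case by (simp add: field_simps)
  qed
qed

lemma main_exp:
  fixes G :: "complex \<Rightarrow> complex" and Dc :: "nat \<Rightarrow> complex" and S :: "complex fps"
    and c :: complex and r :: real
  assumes conv: "fps_conv_radius S > 0" and r: "r > 0"
    and gdef: "\<forall>\<xi>\<in>ball 0 r - {0}. G \<xi> = (\<xi> / (1 - exp (- \<xi>))) powr c * eval_fps S \<xi>"
    and ddef: "\<forall>s\<in>ball 1 1. (\<lambda>j. Dc j * (1 - s) ^ j) sums G (- Ln s)"
  shows "Abs_fps Dc = (fps_binomial c oo Ux x0) * (S oo (fps_X * (1 + Ux x0)))"
proof -
  define L where "L = (\<lambda>t::complex. - Ln (1 - t))"
  define Xi where "Xi = fps_X * (1 + Ux x0)"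
  have LX: "L has_fps_expansion Xi" unfolding L_def Xi_def Xi_eq by (rule ln_exp)
  have Xi0: "Xi $ 0 = 0" by (simp add: Xi_def U0_nth)
  have Xi1: "Xi $ 1 = 1" by (simp add: Xi_def U0_nth)
  have sd: "1 \<le> subdegree Xi"
    by (rule subdegree_geI) (use Xi0 Xi1 in auto)
  define psi where "psi = (\<lambda>x. if x = 0 then 1 else L x / x ^ 1)"
  have sh: "fps_shift 1 Xi = 1 + Ux x0"
    by (rule fps_ext) (simp add: Xi_def)
  have psiX: "psi has_fps_expansion (1 + Ux x0)"
    using has_fps_expansion_shift[OF LX sd, of 1] Xi1 unfolding psi_def sh by simp
  have U: "(\<lambda>t. psi t - 1) has_fps_expansion Ux x0"
    using has_fps_expansion_diff[OF psiX has_fps_expansion_1] by simp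
  have U00: "Ux x0 $ 0 = 0" by (simp add: U0_nth)
  have P: "(\<lambda>t. psi t powr c) has_fps_expansion (fps_binomial c oo Ux x0)"
    using has_fps_expansion_compose[OF has_fps_expansion_binomial_complex[of c] U U00]
    by (simp add: o_def)
  have Q: "(\<lambda>t. eval_fps S (L t)) has_fps_expansion (S oo Xi)"
    using has_fps_expansion_compose[OF eval_fps_has_fps_expansion[OF conv] LX Xi0]
    by (simp add: o_def)
  have PQ: "(\<lambda>t. psi t powr c * eval_fps S (L t)) has_fps_expansion
              ((fps_binomial c oo Ux x0) * (S oo Xi))"
    by (rule has_fps_expansion_mult[OF P Q])
  have H: "(\<lambda>t. G (L t)) has_fps_expansion Abs_fps Dc"
  proof (rule has_fps_expansionI)
    have "eventually (\<lambda>t::complex. t \<in> ball 0 1) (nhds 0)"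
      by (rule eventually_nhds_in_open) auto
    then show "eventually (\<lambda>t. (\<lambda>n. Abs_fps Dc $ n * t ^ n) sums G (L t)) (nhds 0)"
    proof eventually_elim
      case (elim t)
      then have "1 - t \<in> ball 1 1" by (simp add: dist_norm)
      from ddef[rule_format, OF this] show ?case by (simp add: L_def)
    qed
  qed
  have ev: "eventually (\<lambda>t. G (L t) = psi t powr c * eval_fps S (L t)) (at 0)"
  proof -
    have "continuous (at 0) L" by (rule has_fps_expansion_imp_continuous[OF LX])
    moreover have "L 0 = 0" by (simp add: L_def)
    ultimately have "(L \<longlongrightarrow> 0) (at 0)" by (simp add: continuous_within)
    then have e1: "eventually (\<lambda>t. L t \<in> ball 0 r) (at 0)"
      using r unfolding tendsto_def by (metis open_ball centre_in_ball)
    have "eventually (\<lambda>t::complex. t \<in> ball 0 1) (nhds 0)"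
      by (rule eventually_nhds_in_open) auto
    then have e2: "eventually (\<lambda>t::complex. t \<in> ball 0 1 \<and> t \<noteq> 0) (at 0)"
      by (auto simp: eventually_at_filter elim: eventually_mono)
    show ?thesis using e1 e2
    proof eventually_elim
      case (elim t)
      then have t1: "1 - t \<noteq> 0" by auto
      have ex: "exp (- L t) = 1 - t" using t1 by (simp add: L_def)
      have Lnz: "L t \<noteq> 0"
      proof
        assume "L t = 0"
        then have "exp (- L t) = 1" by simp
        with ex elim show False by simp
      qed
      have "G (L t) = (L t / (1 - exp (- L t))) powr c * eval_fps S (L t)"
        using gdef elim Lnz by auto
      also have "L t / (1 - exp (- L t)) = psi t" using ex elim by (simp add: psi_def)
      finally show ?case .
    qed
  qed
  show ?thesis using fps_expansion_unique_at[OF H PQ ev] unfolding Xi_def .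
qed



lemma of_real_pos_not_nonpos_Int: "(x::real) > 0 \<Longrightarrow> complex_of_real x \<notin> \<int>\<^sub>\<le>\<^sub>0"
  by (auto simp: of_real_in_nonpos_Ints_iff)

lemma Gamma_of_real_pos_nz: "(x::real) > 0 \<Longrightarrow> Gamma (complex_of_real x) \<noteq> 0"
  by (simp add: Gamma_eq_zero_iff of_real_pos_not_nonpos_Int)

lemma binom_coef:
  fixes \<rho> :: real
  assumes rho: "\<rho> > 0" and j: "j \<ge> 1"
  shows "(fps_binomial (complex_of_real (\<rho> - 1)) oo Ux x0) $ j
       = (\<Sum>p\<in>{1..j}. bell_partial j p x0 * rGamma (complex_of_real (\<rho> - real p)))
         * Gamma (complex_of_real \<rho>) / fact j"
proof -
  define c where "c = complex_of_real (\<rho> - 1)"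
  have "(fps_binomial c oo Ux x0) $ j = (\<Sum>p=0..j. (c gchoose p) * (Ux x0 ^ p) $ j)"
    by (simp add: fps_compose_nth)
  also have "\<dots> = (\<Sum>p=1..j. (c gchoose p) * (Ux x0 ^ p) $ j)"
    using j by (subst sum.atLeast_Suc_atMost) auto
  also have "\<dots> = (\<Sum>p=1..j. bell_partial j p x0 * rGamma (complex_of_real (\<rho> - real p))
         * Gamma (complex_of_real \<rho>) / fact j)"
  proof (intro sum.cong refl)
    fix p assume p: "p \<in> {1..j}"
    have U: "(Ux x0 ^ p) $ j = bell_partial j p x0 * fact p / fact j"
      by (simp add: bell_eq)
    have cp: "c - of_nat p + 1 = complex_of_real (\<rho> - real p)"
      by (simp add: c_def)
    have poch: "pochhammer (complex_of_real (\<rho> - real p)) p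
              = rGamma (complex_of_real (\<rho> - real p)) * Gamma (complex_of_real \<rho>)"
    proof -
      have e: "complex_of_real (\<rho> - real p) + of_nat p = complex_of_real \<rho>" by simp
      have nz: "rGamma (complex_of_real \<rho>) \<noteq> 0"
        using rho by (simp add: rGamma_eq_zero_iff of_real_pos_not_nonpos_Int)
      have "rGamma (complex_of_real (\<rho> - real p))
            = pochhammer (complex_of_real (\<rho> - real p)) p * rGamma (complex_of_real \<rho>)"
        using pochhammer_rGamma[of "complex_of_real (\<rho> - real p)" p] e by simp
      then show ?thesis using nz by (simp add: rGamma_inverse_Gamma field_simps)
    qed
    show "(c gchoose p) * (Ux x0 ^ p) $ j = bell_partial j p x0 * rGamma (complex_of_real (\<rho> - real p))
         * Gamma (complex_of_real \<rho>) / fact j"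
      unfolding U gbinomial_pochhammer' cp poch by (simp add: field_simps)
  qed
  finally show ?thesis unfolding c_def by (simp add: sum_distrib_right sum_divide_distrib)
qed

lemma conv_S:
  fixes a :: "nat \<Rightarrow> complex" and m l :: nat
  assumes m: "m \<ge> 1" and l: "l \<in> {1..m}" and gev: "gevrey1 m a"
  shows "fps_conv_radius (Abs_fps (\<lambda>k. a (l + m * k) / Gamma (complex_of_real (real l / real m + real k)))) > 0"
proof -
  obtain C K where CK: "\<And>n. norm (a n) \<le> C * K ^ n * Gamma (1 + real n / real m)"
    using gev unfolding gevrey1_def by blast
  define K' where "K' = \<bar>K\<bar> + 1"
  define C' where "C' = \<bar>C\<bar>"
  have K'1: "K' \<ge> 1" by (simp add: K'_def)
  define z where "z = 1 / (4 * K' ^ m)"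
  have zpos: "z > 0" using K'1 by (simp add: z_def)
  define f where "f = (\<lambda>k. a (l + m * k) / Gamma (complex_of_real (real l / real m + real k)))"
  have rl: "real l / real m \<le> 1" "real l / real m > 0" using l m by auto
  have bound: "norm (f k * complex_of_real z ^ k) \<le> C' * K' ^ l * (1/2) ^ k" for k
  proof -
    define \<rho> where "\<rho> = real l / real m + real k"
    have rho: "\<rho> > 0" using rl by (simp add: \<rho>_def)
    have n: "1 + real (l + m * k) / real m = \<rho> + 1" using m by (simp add: \<rho>_def field_simps)
    have G1: "Gamma (\<rho> + 1) = \<rho> * Gamma \<rho>"
      using Gamma_plus1[of \<rho>] rho nonpos_Ints_nonpos[of \<rho>] by force
    have Gp: "Gamma \<rho> > 0" using rho by simp
    have a1: "norm (a (l + m * k)) \<le> C' * K' ^ (l + m * k) * (\<rho> * Gamma \<rho>)"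
    proof -
      have "norm (a (l + m * k)) \<le> C * K ^ (l + m * k) * Gamma (\<rho> + 1)" using CK[of "l + m*k"] n by (simp add: add.commute)
      also have "\<dots> \<le> \<bar>C * K ^ (l + m * k) * Gamma (\<rho> + 1)\<bar>" by simp
      also have "\<dots> = C' * \<bar>K\<bar> ^ (l + m * k) * Gamma (\<rho> + 1)"
        using G1 Gp rho by (simp add: C'_def abs_mult power_abs)
      also have "\<dots> \<le> C' * K' ^ (l + m * k) * Gamma (\<rho> + 1)"
        using G1 Gp rho by (intro mult_right_mono mult_left_mono power_mono) (auto simp: C'_def K'_def)
      finally show ?thesis using G1 by simp
    qed
    have rho2: "\<rho> \<le> 2 ^ k"
    proof -
      have "\<rho> \<le> 1 + real k" using rl by (simp add: \<rho>_def)
      also have "\<dots> \<le> 2 ^ k" by (induction k) auto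
      finally show ?thesis .
    qed
    have fk: "f k = a (l + m * k) / Gamma (complex_of_real \<rho>)" by (simp only: f_def \<rho>_def)
    have gn: "norm (Gamma (complex_of_real \<rho>)) = Gamma \<rho>"
      using Gp by (simp only: Gamma_complex_of_real norm_of_real abs_of_pos)
    have "norm (f k * complex_of_real z ^ k) = norm (a (l + m * k)) / Gamma \<rho> * z ^ k"
      using zpos unfolding fk norm_mult norm_divide norm_power gn by simp
    also have "\<dots> \<le> C' * K' ^ (l + m * k) * \<rho> * z ^ k"
      using a1 Gp zpos by (simp add: divide_le_eq mult_right_mono mult_ac)
    also have "\<dots> \<le> C' * K' ^ (l + m * k) * 2 ^ k * z ^ k"
      using rho2 zpos K'1 by (intro mult_right_mono mult_left_mono) (auto simp: C'_def)
    also have "\<dots> = C' * K' ^ l * (2 * K' ^ m * z) ^ k"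
      by (simp add: power_add power_mult power_mult_distrib mult_ac flip: power_mult)
    also have "2 * K' ^ m * z = 1/2" using K'1 by (simp add: z_def)
    finally show ?thesis .
  qed
  have "summable (\<lambda>k. f k * complex_of_real z ^ k)"
    by (rule summable_comparison_test'[where g = "\<lambda>k. C' * K' ^ l * (1/2) ^ k"])
       (use bound in \<open>auto intro!: summable_mult summable_geometric\<close>)
  then have "conv_radius f \<ge> norm (complex_of_real z)" by (rule conv_radius_geI)
  then have "conv_radius f > 0" using zpos
    by (metis ereal_less(2) norm_of_real abs_of_pos order_less_le_trans zero_less_norm_iff)
  then show ?thesis by (simp add: fps_conv_radius_def f_def)
qed



lemma dcoef_alt: "dcoef \<rho> j = (\<Sum>p\<in>{1..j}. bell_partial j p x0 * rGamma (complex_of_real (\<rho> - real p)))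
                             * Gamma (complex_of_real (\<rho> + real j)) / fact j"
  by (simp add: dcoef_def x0_def)

lemma reindex_set:
  fixes m l J n :: nat and T :: "nat \<Rightarrow> nat \<Rightarrow> complex"
  assumes lm: "l \<in> {1..m}" and nlJ: "n = l + m * J"
  shows "(\<Sum>k\<in>{0..<J}. T (J - k) (l + m * k)) = (\<Sum>(j, L) \<in> {(j, L). j \<ge> 1 \<and> L \<ge> 1 \<and> L + j * m = n}. T j L)"
proof (rule sum.reindex_bij_witness[where j = "\<lambda>k. (J - k, l + m * k)" and i = "\<lambda>(j, L). J - j"])
  fix k assume k: "k \<in> {0..<J}"
  show "(case (J - k, l + m * k) of (j, L) \<Rightarrow> J - j) = k" using k by auto
  from k obtain q where q: "J = k + q" "q \<ge> 1" by (metis atLeastLessThan_iff less_imp_Suc_add add_Suc_right le_add1 plus_1_eq_Suc add_Suc_shift Suc_le_eq)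
  have "l + m * k + q * m = n" using nlJ q by (simp add: algebra_simps)
  then show "(J - k, l + m * k) \<in> {(j, L). j \<ge> 1 \<and> L \<ge> 1 \<and> L + j * m = n}"
    using q lm by auto
  show "(case (J - k, l + m * k) of (j, L) \<Rightarrow> T j L) = T (J - k) (l + m * k)" by simp
next
  fix jL assume jL: "jL \<in> {(j, L). j \<ge> 1 \<and> L \<ge> 1 \<and> L + j * m = n}"
  then obtain j L where e: "jL = (j, L)" "j \<ge> 1" "L \<ge> 1" "L + j * m = n" by auto
  have jJ: "j \<le> J"
  proof (rule ccontr)
    assume "\<not> j \<le> J"
    then have "(J + 1) * m \<le> j * m" by (intro mult_right_mono) auto
    then show False using e nlJ lm by (simp add: algebra_simps)
  qed
  then obtain q where q: "J = j + q" using le_Suc_ex by blast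
  have L: "L = l + m * q" using e nlJ q by (simp add: algebra_simps)
  show "(case jL of (j, L) \<Rightarrow> J - j) \<in> {0..<J}" using e jJ by auto
  show "(\<lambda>k. (J - k, l + m * k)) (case jL of (j, L) \<Rightarrow> J - j) = jL" using e q L by auto
qed

theorem proposition5p5:
  fixes m :: nat and a :: "nat \<Rightarrow> complex" and A B :: real
    and g :: "nat \<Rightarrow> complex \<Rightarrow> complex" and d :: "nat \<Rightarrow> complex"
  assumes m: "m \<ge> 1"
    and gev: "gevrey1 m a"
    and borel: "\<exists>F. F holomorphic_on Omega_star_coord m
                 \<and> (\<exists>r>0. \<forall>w \<in> ball 0 r - {0}.
                       F w = (\<Sum>n. a (Suc n) * w ^ Suc n / w ^ m / Gamma (of_real (real (Suc n) / real m))))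
                 \<and> (\<forall>w \<in> Omega_star_coord m. norm (F w * w ^ (m - 1)) \<le> A * exp (B * norm w ^ m))"
    and AB: "A > 0" "B > 0"
    and g_holo: "\<forall>l\<in>{1..m}. g l holomorphic_on Delta"
    and g_def: "\<forall>l\<in>{1..m}. \<exists>r>0. \<forall>\<xi> \<in> ball 0 r - {0}.
                 g l \<xi> = (\<xi> / (1 - exp (- \<xi>))) powr (of_real (real l / real m - 1))
                         * (\<Sum>k. a (l + m * k) * \<xi> ^ k / Gamma (of_real (real l / real m + real k)))"
    and d_def: "\<forall>l\<in>{1..m}. \<forall>s \<in> ball 1 1.
                 (\<lambda>j. d (l + m * j) * (1 - s) ^ j) sums g l (- Ln s)"
  shows "\<forall>n\<ge>1. d n = (a n + (\<Sum>(j, l) \<in> {(j, l). j \<ge> 1 \<and> l \<ge> 1 \<and> l + j * m = n}.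
                                   dcoef (real l / real m) j * a l))
                       / Gamma (of_real (real n / real m))"
proof (intro allI impI)
  fix n :: nat assume n1: "n \<ge> 1"
  have m0: "m > 0" using m by simp
  define l where "l = (n - 1) mod m + 1"
  define J where "J = (n - 1) div m"
  have lm: "l \<in> {1..m}" using m0 by (auto simp: l_def Suc_le_eq)
  have nlJ: "n = l + m * J"
    using div_mult_mod_eq[of "n - 1" m] n1 by (simp add: l_def J_def algebra_simps)
  define S where "S = Abs_fps (\<lambda>k. a (l + m * k) / Gamma (complex_of_real (real l / real m + real k)))"
  define c where "c = complex_of_real (real l / real m - 1)"
  have conv: "fps_conv_radius S > 0" unfolding S_def by (rule conv_S[OF m lm gev])
  obtain r0 where r0: "r0 > 0" and g0: "\<forall>\<xi> \<in> ball 0 r0 - {0}.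
                 g l \<xi> = (\<xi> / (1 - exp (- \<xi>))) powr c
                         * (\<Sum>k. a (l + m * k) * \<xi> ^ k / Gamma (of_real (real l / real m + real k)))"
    using g_def lm unfolding c_def by blast
  have gdef: "\<forall>\<xi>\<in>ball 0 r0 - {0}. g l \<xi> = (\<xi> / (1 - exp (- \<xi>))) powr c * eval_fps S \<xi>"
    using g0 by (simp add: eval_fps_def S_def)
  have ddef: "\<forall>s\<in>ball 1 1. (\<lambda>j. d (l + m * j) * (1 - s) ^ j) sums g l (- Ln s)"
    using d_def lm by blast
  have E: "Abs_fps (\<lambda>j. d (l + m * j)) = (fps_binomial c oo Ux x0) * (S oo (fps_X * (1 + Ux x0)))"
    by (rule main_exp[OF conv r0 gdef ddef])
  have U00: "Ux x0 $ 0 = 0" by (simp add: U0_nth)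
  have dn: "d n = (\<Sum>k=0..J. S $ k * (fps_binomial (c + of_nat k) oo Ux x0) $ (J - k))"
  proof -
    have "d n = Abs_fps (\<lambda>j. d (l + m * j)) $ J" by (simp add: nlJ)
    also have "\<dots> = (\<Sum>k=0..J. S $ k * (fps_binomial (c + of_nat k) oo Ux x0) $ (J - k))"
      unfolding E by (rule key_coeff[OF U00])
    finally show ?thesis .
  qed
  define \<rho> where "\<rho> = (\<lambda>k. real (l + m * k) / real m)"
  have rhoeq: "real l / real m + real k = \<rho> k" for k using m0 by (simp add: \<rho>_def field_simps)
  have rhopos: "\<rho> k > 0" for k using lm m0 unfolding \<rho>_def by (intro divide_pos_pos) (auto simp del: of_nat_add)
  have ck: "c + of_nat k = complex_of_real (\<rho> k - 1)" for k
  proof -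
    have "\<rho> k - 1 = (real l / real m - 1) + real k" using rhoeq[of k] by simp
    then have "complex_of_real (\<rho> k - 1) = complex_of_real (real l / real m - 1) + complex_of_real (real k)"
      by (metis of_real_add)
    then show ?thesis by (simp only: c_def of_real_of_nat_eq)
  qed
  have Sk: "S $ k = a (l + m * k) / Gamma (complex_of_real (\<rho> k))" for k
    by (simp only: S_def fps_nth_Abs_fps rhoeq)
  define T where "T = (\<lambda>j L. (\<Sum>p\<in>{1..j}. bell_partial j p x0 * rGamma (complex_of_real (real L / real m - real p)))
                             * a L / fact j)"
  define Gn where "Gn = Gamma (complex_of_real (real n / real m))"
  have rhoJ: "\<rho> J = real n / real m" by (simp add: \<rho>_def nlJ)
  have Gnz: "Gn \<noteq> 0" unfolding Gn_def using rhoJ rhopos[of J] by (intro Gamma_of_real_pos_nz) simp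
  have termJ: "S $ J * (fps_binomial (c + of_nat J) oo Ux x0) $ (J - J) = a n / Gn"
    by (simp add: Sk rhoJ Gn_def nlJ[symmetric])
  have termk: "S $ k * (fps_binomial (c + of_nat k) oo Ux x0) $ (J - k) = T (J - k) (l + m * k)"
    if k: "k \<in> {0..<J}" for k
  proof -
    have j1: "J - k \<ge> 1" using k by auto
    have Gz: "Gamma (complex_of_real (\<rho> k)) \<noteq> 0" by (rule Gamma_of_real_pos_nz[OF rhopos])
    show ?thesis
      unfolding ck binom_coef[OF rhopos j1] Sk T_def using Gz by (simp add: \<rho>_def field_simps)
  qed
  have lhs: "d n = a n / Gn + (\<Sum>k\<in>{0..<J}. T (J - k) (l + m * k))"
  proof -
    have "d n = (\<Sum>k\<in>{0..<J}. S $ k * (fps_binomial (c + of_nat k) oo Ux x0) $ (J - k))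
              + S $ J * (fps_binomial (c + of_nat J) oo Ux x0) $ (J - J)"
      unfolding dn by (simp add: atLeastLessThanSuc_atLeastAtMost[symmetric])
    then show ?thesis using termJ termk by simp
  qed
  have rhs_term: "dcoef (real L / real m) j * a L / Gn = T j L"
    if "(j, L) \<in> {(j, L). j \<ge> 1 \<and> L \<ge> 1 \<and> L + j * m = n}" for j L
  proof -
    have "real L / real m + real j = real n / real m"
      using that m0 by (auto simp: field_simps simp flip: of_nat_mult of_nat_add)
    then show ?thesis unfolding dcoef_alt T_def Gn_def using Gnz[unfolded Gn_def] by simp
  qed
  have "(a n + (\<Sum>(j, L) \<in> {(j, L). j \<ge> 1 \<and> L \<ge> 1 \<and> L + j * m = n}. dcoef (real L / real m) j * a L)) / Gn
        = a n / Gn + (\<Sum>(j, L) \<in> {(j, L). j \<ge> 1 \<and> L \<ge> 1 \<and> L + j * m = n}. dcoef (real L / real m) j * a L / Gn)"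
    by (simp add: add_divide_distrib sum_divide_distrib case_prod_unfold)
  also have "(\<Sum>(j, L) \<in> {(j, L). j \<ge> 1 \<and> L \<ge> 1 \<and> L + j * m = n}. dcoef (real L / real m) j * a L / Gn)
           = (\<Sum>(j, L) \<in> {(j, L). j \<ge> 1 \<and> L \<ge> 1 \<and> L + j * m = n}. T j L)"
    by (intro sum.cong refl) (use rhs_term in auto)
  also have "\<dots> = (\<Sum>k\<in>{0..<J}. T (J - k) (l + m * k))"
    by (rule reindex_set[OF lm nlJ, symmetric])
  finally show "d n = (a n + (\<Sum>(j, l) \<in> {(j, l). j \<ge> 1 \<and> l \<ge> 1 \<and> l + j * m = n}.
                                   dcoef (real l / real m) j * a l))
                       / Gamma (of_real (real n / real m))"
    using lhs unfolding Gn_def by simp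
qed

end
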